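(* Let $\sigma^2$ be any $d\times d$ symmetric positive definite matrix with eigenvalues $\lambda_1\ge\dots\ge\lambda_d>0$. Then $\sigma^2$ can be represented as $$\sigma^2=\sum_{J\in\mathcal J}\tilde g(J)JJ^T,$$ with $\tilde g(J)>0$, for a finite set $\mathcal J\subset\mathbb Z^d$ such that $e^{(i)}\in\mathcal J$ for $1\le i\le d$, such that $J\in\mathcal J$ implies $-J\in\mathcal J$ with $\tilde g(-J)=\tilde g(J)$, and such that $$\max_{J\in\mathcal J}\max_{1\le i\le d}|J_i|\le1+\tfrac12\sqrt{2(d-1)\rho(\sigma^2)}.$$ Furthermore $\tilde g(e^{(i)})\ge\frac14\lambda_d$ for each $1\le i\le d$.
   Context: $e^{(i)}$ denotes the $i$-th standard unit vector in $\mathbb R^d$, and $\rho(\sigma^2):=\lambda_1/\lambda_d$ is the condition number of $\sigma^2$. *)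

theory Defs
  imports "HOL-Analysis.Analysis"
begin

definition sym_pos_def_mat :: "real^'n^'n \<Rightarrow> bool" where
  "sym_pos_def_mat A \<longleftrightarrow> transpose A = A \<and> (\<forall>x. x \<noteq> 0 \<longrightarrow> x \<bullet> (A *v x) > 0)"

definition mat_eigenvalues :: "real^'n^'n \<Rightarrow> real set" where
  "mat_eigenvalues A = {c. \<exists>v. v \<noteq> 0 \<and> A *v v = c *s v}"

definition lambda_max :: "real^'n^'n \<Rightarrow> real" where
  "lambda_max A = Max (mat_eigenvalues A)"

definition lambda_min :: "real^'n^'n \<Rightarrow> real" where
  "lambda_min A = Min (mat_eigenvalues A)"

definition cond_number :: "real^'n^'n \<Rightarrow> real" where
  "cond_number A = lambda_max A / lambda_min A"

definition outer :: "real^'n \<Rightarrow> real^'n^'n" where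
  "outer J = (\<chi> i j. J$i * J$j)"

definition int_vec :: "real^'n \<Rightarrow> bool" where
  "int_vec J \<longleftrightarrow> (\<forall>i. J$i \<in> \<int>)"

end

theory Submission
  imports Defs
begin


definition psd :: "real^'n^'n \<Rightarrow> bool" where
  "psd A \<longleftrightarrow> (\<forall>x. 0 \<le> x \<bullet> (A *v x))"

lemma sym_dot:
  fixes A :: "real^'n^'n"
  assumes "transpose A = A"
  shows "x \<bullet> (A *v y) = y \<bullet> (A *v x)"
proof -
  have "x \<bullet> (A *v y) = (x v* A) \<bullet> y" by (simp add: dot_lmul_matrix)
  also have "x v* A = transpose A *v x" by simp
  also have "\<dots> = A *v x" using assms by simp
  finally show ?thesis by (simp add: inner_commute)
qed

lemma quad_expand:
  fixes C :: "real^'n^'n"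
  assumes "transpose C = C"
  shows "(z + t *\<^sub>R y) \<bullet> (C *v (z + t *\<^sub>R y)) =
    z \<bullet> (C *v z) + 2*t*(y \<bullet> (C *v z)) + t^2 * (y \<bullet> (C *v y))"
proof -
  have "C *v (z + t *\<^sub>R y) = C *v z + t *\<^sub>R (C *v y)"
    by (simp add: matrix_vector_right_distrib matrix_vector_mult_scaleR)
  then show ?thesis using sym_dot[OF assms, of z y]
    by (simp add: inner_add_left inner_add_right algebra_simps power2_eq_square)
qed

lemma psd_null:
  fixes C :: "real^'n^'n"
  assumes "psd C" "transpose C = C" "z \<bullet> (C *v z) = 0"
  shows "C *v z = 0"
proof -
  define y where "y = C *v z"
  define a where "a = y \<bullet> (C *v z)"
  define b where "b = y \<bullet> (C *v y)"
  have b0: "b \<ge> 0" using assms(1) unfolding psd_def b_def by auto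
  define t where "t = - a / (b+1)"
  have "0 \<le> (z + t *\<^sub>R y) \<bullet> (C *v (z + t *\<^sub>R y))" using assms(1) unfolding psd_def by auto
  also have "\<dots> = 2*t*a + t^2*b" using quad_expand[OF assms(2)] assms(3) a_def b_def by simp
  finally have Q: "0 \<le> 2*t*a + t^2*b" .
  have ht: "t*(b+1) = -a" using b0 unfolding t_def by simp
  have "(b+1)^2*(2*t*a+t^2*b) = 2*a*(t*(b+1))*(b+1) + (t*(b+1))^2*b"
    by (simp add: algebra_simps power2_eq_square)
  also have "\<dots> = - (a^2*(b+2))" unfolding ht by (simp add: algebra_simps power2_eq_square)
  finally have "0 \<le> - (a^2*(b+2))" using Q by (metis zero_le_mult_iff zero_le_power2)
  then have "a^2 * (b+2) \<le> 0" by simp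
  then have "a = 0" using b0
    by (smt (verit) mult_pos_pos zero_less_power2)
  then show ?thesis unfolding a_def y_def by simp
qed



lemma mat_mult_vec: "(mat k :: real^'n^'n) *v x = k *\<^sub>R x"
proof -
  have "(\<Sum>j\<in>UNIV. (if i = j then k else 0) * x $ j) = k * x $ i" for i
  proof -
    have "(\<Sum>j\<in>UNIV. (if i = j then k else 0) * x $ j) = (\<Sum>j\<in>UNIV. if i = j then k * x $ j else 0)"
      by (rule sum.cong) auto
    then show ?thesis by simp
  qed
  then show ?thesis by (simp add: vec_eq_iff matrix_vector_mult_def mat_def)
qed

lemma transpose_diff: "transpose (A - B :: real^'n^'n) = transpose A - transpose B"
  by (simp add: vec_eq_iff transpose_def)

lemma scaleR_s: "(c::real) *s (x::real^'n) = c *\<^sub>R x"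
  by (simp add: vec_eq_iff)

lemma rayleigh_min:
  fixes A :: "real^'n^'n"
  assumes sym: "transpose A = A"
  shows "\<exists>u \<mu>. u \<noteq> 0 \<and> A *v u = \<mu> *s u \<and> (\<forall>x. \<mu> * (x \<bullet> x) \<le> x \<bullet> (A *v x))"
proof -
  define f where "f x = x \<bullet> (A *v x)" for x
  have cont: "continuous_on (sphere 0 1) f" unfolding f_def
    by (intro continuous_intros linear_continuous_on matrix_vector_mul_bounded_linear)
  have ne: "sphere (0::real^'n) 1 \<noteq> {}"
    using norm_axis_1[of undefined] by (metis mem_sphere_0 empty_iff)
  obtain u where u: "u \<in> sphere 0 1" and umin: "\<And>y. y \<in> sphere 0 1 \<Longrightarrow> f u \<le> f y"
    using continuous_attains_inf[OF compact_sphere ne cont] by blast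
  define \<mu> where "\<mu> = f u"
  have nu: "norm u = 1" using u by simp
  have uu: "u \<bullet> u = 1" using nu by (simp add: dot_square_norm)
  have low: "\<mu> * (x \<bullet> x) \<le> x \<bullet> (A *v x)" for x
  proof (cases "x = 0")
    case True then show ?thesis by simp
  next
    case False
    define y where "y = (1 / norm x) *\<^sub>R x"
    have "y \<in> sphere 0 1" using False by (simp add: y_def)
    then have "\<mu> \<le> f y" using umin unfolding \<mu>_def by blast
    also have "f y = (x \<bullet> (A *v x)) / (norm x)^2"
      unfolding f_def y_def by (simp add: matrix_vector_mult_scaleR power2_eq_square)
    finally have "\<mu> * (norm x)^2 \<le> x \<bullet> (A *v x)" using False
      by (simp add: pos_le_divide_eq)
    then show ?thesis by (simp add: dot_square_norm)
  qed
  define C where "C = A - mat \<mu>"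
  have Cx: "C *v x = A *v x - \<mu> *\<^sub>R x" for x
    unfolding C_def by (simp add: matrix_vector_mult_diff_rdistrib mat_mult_vec)
  have psdC: "psd C" unfolding psd_def Cx
    using low by (simp add: inner_diff_right)
  have symC: "transpose C = C" unfolding C_def transpose_diff transpose_mat sym ..
  have "u \<bullet> (C *v u) = 0" unfolding Cx using uu by (simp add: inner_diff_right \<mu>_def f_def)
  then have "C *v u = 0" using psd_null[OF psdC symC] by blast
  then have "A *v u = \<mu> *s u" unfolding Cx scaleR_s by simp
  moreover have "u \<noteq> 0" using nu by auto
  ultimately show ?thesis using low by blast
qed



lemma diag_entry: "(A::real^'n^'n) $ j $ j = axis j 1 \<bullet> (A *v axis j 1)"
proof -
  have "(A *v axis j 1) $ j = (\<Sum>k\<in>UNIV. A $ j $ k * (if k = j then 1 else 0))"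
    unfolding matrix_vector_mult_def by (simp add: axis_def)
  also have "\<dots> = (\<Sum>k\<in>UNIV. if k = j then A $ j $ k else 0)"
    by (rule sum.cong) auto
  finally have "(A *v axis j 1) $ j = A $ j $ j" by simp
  then show ?thesis by (simp add: inner_axis')
qed

lemma eig_facts:
  fixes A :: "real^'n^'n"
  assumes spd: "sym_pos_def_mat A"
  shows "\<exists>\<mu> \<nu>. lambda_min A = \<mu> \<and> \<mu> > 0 \<and> (\<forall>x. \<mu> * (x \<bullet> x) \<le> x \<bullet> (A *v x)) \<and>
     \<mu> \<le> \<nu> \<and> \<nu> \<le> lambda_max A \<and> (\<forall>j. A $ j $ j \<le> \<nu>)"
proof -
  have sym: "transpose A = A" and pd: "\<And>x. x \<noteq> 0 \<Longrightarrow> x \<bullet> (A *v x) > 0"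
    using spd unfolding sym_pos_def_mat_def by auto
  define E where "E = mat_eigenvalues A"
  define v where "v c = (SOME w. w \<noteq> 0 \<and> A *v w = c *s w)" for c
  have v: "v c \<noteq> 0 \<and> A *v v c = c *s v c" if "c \<in> E" for c
  proof -
    from that obtain w where "w \<noteq> 0 \<and> A *v w = c *s w" unfolding E_def mat_eigenvalues_def by auto
    then show ?thesis unfolding v_def by (rule someI)
  qed
  have orth: "v c \<bullet> v c' = 0" if "c \<in> E" "c' \<in> E" "c \<noteq> c'" for c c'
  proof -
    have "v c' \<bullet> (A *v v c) = v c \<bullet> (A *v v c')" using sym_dot[OF sym] by blast
    then have "c * (v c \<bullet> v c') = c' * (v c \<bullet> v c')"
      using v[OF that(1)] v[OF that(2)] by (simp add: scaleR_s inner_commute)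
    then show ?thesis using that(3) by simp
  qed
  have injv: "inj_on v E"
  proof
    fix c c' assume c: "c \<in> E" "c' \<in> E" "v c = v c'"
    then have "c *s v c = c' *s v c" using v[OF c(1)] v[OF c(2)] by metis
    then have "(c - c') *\<^sub>R v c = 0" by (simp add: scaleR_s algebra_simps)
    then show "c = c'" using v[OF c(1)] by simp
  qed
  have "pairwise orthogonal (v ` E)"
    unfolding pairwise_def orthogonal_def using orth by auto
  moreover have "0 \<notin> v ` E" using v by auto
  ultimately have "independent (v ` E)" by (rule pairwise_orthogonal_independent)
  then have "finite (v ` E)" using independent_bound by blast
  then have finE: "finite E" using injv finite_imageD by blast
  obtain u \<mu> where u: "u \<noteq> 0" "A *v u = \<mu> *s u" and low: "\<And>x. \<mu> * (x \<bullet> x) \<le> x \<bullet> (A *v x)"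
    using rayleigh_min[OF sym] by blast
  have muE: "\<mu> \<in> E" unfolding E_def mat_eigenvalues_def using u by auto
  have ge: "\<mu> \<le> c" if "c \<in> E" for c
  proof -
    have "\<mu> * (v c \<bullet> v c) \<le> v c \<bullet> (A *v v c)" by (rule low)
    also have "\<dots> = c * (v c \<bullet> v c)" using v[OF that] by (simp add: scaleR_s)
    finally show ?thesis using v[OF that] by simp
  qed
  have lmin: "lambda_min A = \<mu>" unfolding lambda_min_def E_def[symmetric]
    using finE muE ge by (intro Min_eqI) auto
  have "0 < u \<bullet> (A *v u)" using pd u(1) by blast
  also have "\<dots> = \<mu> * (u \<bullet> u)" using u by (simp add: scaleR_s)
  finally have mupos: "\<mu> > 0" using u(1) inner_ge_zero[of u] by (smt (verit) mult_nonpos_nonneg)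
  have symm: "transpose (-A) = -A" using sym by (simp add: vec_eq_iff transpose_def)
  obtain u' \<mu>' where u': "u' \<noteq> 0" "(-A) *v u' = \<mu>' *s u'" and low': "\<And>x. \<mu>' * (x \<bullet> x) \<le> x \<bullet> ((-A) *v x)"
    using rayleigh_min[OF symm] by blast
  define \<nu> where "\<nu> = - \<mu>'"
  have negA: "(-A) *v x = - (A *v x)" for x by (simp add: vec_eq_iff matrix_vector_mult_def sum_negf)
  have up: "x \<bullet> (A *v x) \<le> \<nu> * (x \<bullet> x)" for x using low'[of x] unfolding negA \<nu>_def by simp
  have "A *v u' = \<nu> *s u'" using u'(2) unfolding negA \<nu>_def by (simp add: vec_eq_iff) (metis minus_equation_iff)
  then have nuE: "\<nu> \<in> E" unfolding E_def mat_eigenvalues_def using u' by auto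
  have "\<nu> \<le> lambda_max A" unfolding lambda_max_def E_def[symmetric] using finE nuE by simp
  moreover have "\<mu> \<le> \<nu>" using ge nuE by blast
  moreover have "A $ j $ j \<le> \<nu>" for j
    using up[of "axis j 1"] by (simp add: diag_entry inner_axis')
  ultimately show ?thesis using lmin mupos low by blast
qed



definition diagm :: "real^'n \<Rightarrow> real^'n^'n" where
  "diagm v = (\<chi> i j. if i = j then v$i else 0)"

lemma diagm_add: "diagm (v + w) = diagm v + diagm w"
  by (simp add: diagm_def vec_eq_iff)

lemma round_aux:
  fixes y :: "real^'n" and T :: "'n set"
  assumes "finite T"
  shows "\<exists>G q v. finite G \<and> (\<forall>J\<in>G. q J > 0) \<and> sum q G = 1 \<and> (\<Sum>J\<in>G. q J *\<^sub>R J) = y \<and>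
     (\<Sum>J\<in>G. q J *\<^sub>R outer J) = outer y + diagm v \<and> (\<forall>j. 0 \<le> v$j \<and> v$j \<le> 1/4) \<and>
     (\<forall>j. j \<notin> T \<longrightarrow> v$j = 0) \<and>
     (\<forall>J\<in>G. \<forall>j. (j\<in>T \<longrightarrow> J$j \<in> {of_int \<lfloor>y$j\<rfloor>, of_int \<lceil>y$j\<rceil>}) \<and> (j\<notin>T \<longrightarrow> J$j = y$j))"
  using assms
proof (induction T rule: finite_induct)
  case empty
  show ?case
    by (rule exI[of _ "{y}"], rule exI[of _ "\<lambda>_. 1"], rule exI[of _ 0])
       (simp add: diagm_def vec_eq_iff)
next
  case (insert k T)
  from insert.IH obtain G q v where fin: "finite G" and qpos: "\<forall>J\<in>G. q J > 0" and q1: "sum q G = 1"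
    and m1: "(\<Sum>J\<in>G. q J *\<^sub>R J) = y" and m2: "(\<Sum>J\<in>G. q J *\<^sub>R outer J) = outer y + diagm v"
    and vb: "\<forall>j. 0 \<le> v$j \<and> v$j \<le> 1/4" and v0: "\<forall>j. j \<notin> T \<longrightarrow> v$j = 0"
    and co: "\<forall>J\<in>G. \<forall>j. (j\<in>T \<longrightarrow> J$j \<in> {of_int \<lfloor>y$j\<rfloor>, of_int \<lceil>y$j\<rceil>}) \<and> (j\<notin>T \<longrightarrow> J$j = y$j)"
    by blast
  have Jk: "J$k = y$k" if "J \<in> G" for J using co that insert.hyps(2) by blast
  show ?case
  proof (cases "y$k = of_int \<lfloor>y$k\<rfloor>")
    case True
    show ?thesis
      apply (rule exI[of _ G], rule exI[of _ q], rule exI[of _ v])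
      using fin qpos q1 m1 m2 vb v0 co True Jk by auto
  next
    case False
    define f where "f = real_of_int \<lfloor>y$k\<rfloor>"
    define c where "c = real_of_int \<lceil>y$k\<rceil>"
    have cf: "c = f + 1" using False unfolding c_def f_def by (simp add: ceiling_altdef)
    define p where "p = y$k - f"
    have p01: "0 < p" "p < 1"
    proof -
      have a: "real_of_int \<lfloor>y$k\<rfloor> \<le> y$k" "y$k < real_of_int \<lfloor>y$k\<rfloor> + 1"
        using of_int_floor_le real_of_int_floor_add_one_gt by auto
      then show "p < 1" unfolding p_def f_def by linarith
      show "0 < p" using a(1) False unfolding p_def f_def by linarith
    qed
    define lo where "lo J = (\<chi> j. if j = k then f else J$j)" for J :: "real^'n"
    define hi where "hi J = (\<chi> j. if j = k then c else J$j)" for J :: "real^'n"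
    define bk where "bk J = (\<chi> j. if j = k then y$k else J$j)" for J :: "real^'n"
    define G' where "G' = lo ` G \<union> hi ` G"
    define q' where "q' J = (if J$k = f then 1 - p else p) * q (bk J)" for J
    define e :: "real^'n" where "e = (\<chi> j. if j = k then p*(1-p) else 0)"
    define v' where "v' = v + e"
    have blo: "bk (lo J) = J" and bhi: "bk (hi J) = J" if "J \<in> G" for J
      using Jk[OF that] by (auto simp: bk_def lo_def hi_def vec_eq_iff)
    have injlo: "inj_on lo G" by (metis blo inj_on_inverseI)
    have injhi: "inj_on hi G" by (metis bhi inj_on_inverseI)
    have disj: "lo ` G \<inter> hi ` G = {}"
    proof -
      have "lo J $ k \<noteq> hi J' $ k" for J J' using cf by (simp add: lo_def hi_def)
      then show ?thesis by (metis (no_types, lifting) disjoint_iff imageE)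
    qed
    have split: "(\<Sum>J\<in>G'. F J) = (\<Sum>J\<in>G. F (lo J) + F (hi J))" for F :: "real^'n \<Rightarrow> 'b::comm_monoid_add"
      unfolding G'_def using fin disj
      by (simp add: sum.union_disjoint sum.reindex[OF injlo] sum.reindex[OF injhi] sum.distrib)
    have qlo: "q' (lo J) = (1-p) * q J" and qhi: "q' (hi J) = p * q J" if "J \<in> G" for J
      using blo[OF that] bhi[OF that] cf by (auto simp: q'_def lo_def hi_def)
    have comb1: "(1-p) *\<^sub>R lo J + p *\<^sub>R hi J = J" if "J \<in> G" for J
      using Jk[OF that] cf unfolding lo_def hi_def p_def by (auto simp: vec_eq_iff algebra_simps)
    have comb2: "(1-p) *\<^sub>R outer (lo J) + p *\<^sub>R outer (hi J) = outer J + diagm e" if "J \<in> G" for J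
      using Jk[OF that] cf unfolding lo_def hi_def e_def diagm_def outer_def
      by (auto simp: vec_eq_iff algebra_simps p_def power2_eq_square)
    have "finite G'" unfolding G'_def using fin by simp
    moreover have "\<forall>J\<in>G'. q' J > 0" unfolding G'_def using qlo qhi qpos p01 by auto
    moreover have "sum q' G' = 1" unfolding split using qlo qhi q1
      by (simp add: algebra_simps sum.distrib flip: sum_distrib_left)
    moreover have "(\<Sum>J\<in>G'. q' J *\<^sub>R J) = y"
    proof -
      have "(\<Sum>J\<in>G'. q' J *\<^sub>R J) = (\<Sum>J\<in>G. q J *\<^sub>R ((1-p) *\<^sub>R lo J + p *\<^sub>R hi J))"
        unfolding split by (rule sum.cong) (simp_all add: qlo qhi scaleR_add_right mult_ac)
      also have "\<dots> = (\<Sum>J\<in>G. q J *\<^sub>R J)" by (rule sum.cong) (auto simp: comb1)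
      finally show ?thesis using m1 by simp
    qed
    moreover have "(\<Sum>J\<in>G'. q' J *\<^sub>R outer J) = outer y + diagm v'"
    proof -
      have "(\<Sum>J\<in>G'. q' J *\<^sub>R outer J) = (\<Sum>J\<in>G. q J *\<^sub>R ((1-p) *\<^sub>R outer (lo J) + p *\<^sub>R outer (hi J)))"
        unfolding split by (rule sum.cong) (simp_all add: qlo qhi scaleR_add_right mult_ac)
      also have "\<dots> = (\<Sum>J\<in>G. q J *\<^sub>R outer J + q J *\<^sub>R diagm e)"
        by (rule sum.cong) (auto simp: comb2 scaleR_add_right)
      also have "\<dots> = outer y + diagm v + diagm e" using m2 q1
        by (simp add: sum.distrib flip: scaleR_left.sum)
      finally show ?thesis unfolding v'_def diagm_add by simp
    qed
    moreover have "\<forall>j. 0 \<le> v'$j \<and> v'$j \<le> 1/4"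
    proof
      fix j
      have "1/4 - p*(1-p) = (p - 1/2)^2" by (simp add: power2_eq_square algebra_simps)
      then have "p*(1-p) \<le> 1/4" by (metis diff_ge_0_iff_ge zero_le_power2)
      moreover have "0 \<le> p*(1-p)" using p01 by simp
      ultimately show "0 \<le> v'$j \<and> v'$j \<le> 1/4" using vb v0 insert.hyps(2)
        unfolding v'_def e_def by auto
    qed
    moreover have "\<forall>j. j \<notin> insert k T \<longrightarrow> v'$j = 0" using v0 unfolding v'_def e_def by auto
    moreover have "\<forall>J\<in>G'. \<forall>j. (j\<in>insert k T \<longrightarrow> J$j \<in> {of_int \<lfloor>y$j\<rfloor>, of_int \<lceil>y$j\<rceil>}) \<and> (j\<notin>insert k T \<longrightarrow> J$j = y$j)"
    proof -
      have L: "(j\<in>insert k T \<longrightarrow> (lo J)$j \<in> {of_int \<lfloor>y$j\<rfloor>, of_int \<lceil>y$j\<rceil>}) \<and> (j\<notin>insert k T \<longrightarrow> (lo J)$j = y$j)"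
        if "J \<in> G" for J j
        using co that by (cases "j = k") (simp_all add: lo_def f_def)
      have H: "(j\<in>insert k T \<longrightarrow> (hi J)$j \<in> {of_int \<lfloor>y$j\<rfloor>, of_int \<lceil>y$j\<rceil>}) \<and> (j\<notin>insert k T \<longrightarrow> (hi J)$j = y$j)"
        if "J \<in> G" for J j
        using co that by (cases "j = k") (simp_all add: hi_def c_def)
      show ?thesis unfolding G'_def using L H by blast
    qed
    ultimately show ?thesis by blast
  qed
qed



lemma round:
  fixes y :: "real^'n"
  shows "\<exists>G q v. finite G \<and> (\<forall>J\<in>G. q J > 0) \<and> (\<Sum>J\<in>G. q J *\<^sub>R outer J) = outer y + diagm v \<and>
     (\<forall>j. 0 \<le> v$j \<and> v$j \<le> 1/4) \<and> (\<forall>J\<in>G. int_vec J \<and> (\<forall>j. \<bar>J$j\<bar> \<le> \<bar>y$j\<bar> + 1))"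
proof -
  obtain G q v where G: "finite G" "\<forall>J\<in>G. q J > 0" "(\<Sum>J\<in>G. q J *\<^sub>R outer J) = outer y + diagm v"
     "\<forall>j. 0 \<le> v$j \<and> v$j \<le> 1/4"
     and co: "\<forall>J\<in>G. \<forall>j. J$j \<in> {of_int \<lfloor>y$j\<rfloor>, of_int \<lceil>y$j\<rceil>}"
    using round_aux[of "UNIV :: 'n set" y] by auto
  have "int_vec J \<and> (\<forall>j. \<bar>J$j\<bar> \<le> \<bar>y$j\<bar> + 1)" if "J \<in> G" for J
  proof -
    have "J$j \<in> \<int> \<and> \<bar>J$j\<bar> \<le> \<bar>y$j\<bar> + 1" for j
    proof -
      have c: "of_int \<lceil>y$j\<rceil> - 1 < y$j" using ceiling_correct by blast
      have a: "real_of_int \<lfloor>y$j\<rfloor> \<le> y$j" "y$j < real_of_int \<lfloor>y$j\<rfloor> + 1"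
        "y$j \<le> real_of_int \<lceil>y$j\<rceil>" "real_of_int \<lceil>y$j\<rceil> < y$j + 1"
        using of_int_floor_le real_of_int_floor_add_one_gt le_of_int_ceiling c
        by auto
      from co that have "J$j = of_int \<lfloor>y$j\<rfloor> \<or> J$j = of_int \<lceil>y$j\<rceil>" by auto
      moreover have b: "y$j \<le> \<bar>y$j\<bar>" "- y$j \<le> \<bar>y$j\<bar>" by auto
      ultimately show ?thesis
      proof (elim disjE)
        assume h: "J$j = of_int \<lfloor>y$j\<rfloor>"
        have "\<bar>J$j\<bar> \<le> \<bar>y$j\<bar> + 1" unfolding abs_le_iff h using a b by linarith
        then show ?thesis using h by simp
      next
        assume h: "J$j = of_int \<lceil>y$j\<rceil>"
        have "\<bar>J$j\<bar> \<le> \<bar>y$j\<bar> + 1" unfolding abs_le_iff h using a b by linarith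
        then show ?thesis using h by simp
      qed
    qed
    then show ?thesis unfolding int_vec_def by auto
  qed
  then show ?thesis using G by blast
qed

lemma merge:
  fixes f :: "real^'n \<Rightarrow> 'b::real_vector"
  assumes "finite F" "finite G"
  shows "(\<Sum>J\<in>F\<union>G. ((if J\<in>F then a J else 0) + (if J\<in>G then b J else 0)) *\<^sub>R f J)
     = (\<Sum>J\<in>F. a J *\<^sub>R f J) + (\<Sum>J\<in>G. b J *\<^sub>R f J)"
proof -
  have 1: "(\<Sum>J\<in>F\<union>G. (if J\<in>F then a J else 0) *\<^sub>R f J) = (\<Sum>J\<in>F. a J *\<^sub>R f J)"
  proof -
    have "(\<Sum>J\<in>F\<union>G. (if J\<in>F then a J else 0) *\<^sub>R f J) = (\<Sum>J\<in>F\<union>G. if J\<in>F then a J *\<^sub>R f J else 0)"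
      by (rule sum.cong) auto
    also have "\<dots> = (\<Sum>J\<in>(F\<union>G)\<inter>F. a J *\<^sub>R f J)"
      using sum.inter_restrict[of "F\<union>G" "\<lambda>J. a J *\<^sub>R f J" F] assms by simp
    finally show ?thesis by (simp add: Int_absorb1)
  qed
  have 2: "(\<Sum>J\<in>F\<union>G. (if J\<in>G then b J else 0) *\<^sub>R f J) = (\<Sum>J\<in>G. b J *\<^sub>R f J)"
  proof -
    have "(\<Sum>J\<in>F\<union>G. (if J\<in>G then b J else 0) *\<^sub>R f J) = (\<Sum>J\<in>F\<union>G. if J\<in>G then b J *\<^sub>R f J else 0)"
      by (rule sum.cong) auto
    also have "\<dots> = (\<Sum>J\<in>(F\<union>G)\<inter>G. b J *\<^sub>R f J)"
      using sum.inter_restrict[of "F\<union>G" "\<lambda>J. b J *\<^sub>R f J" G] assms by simp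
    finally show ?thesis by (simp add: Int_absorb1)
  qed
  show ?thesis unfolding scaleR_add_left sum.distrib 1 2 ..
qed

lemma mv_axis: "((B::real^'n^'n) *v axis i 1) $ j = B $ j $ i"
proof -
  have "(B *v axis i 1) $ j = (\<Sum>k\<in>UNIV. B $ j $ k * (if k = i then 1 else 0))"
    unfolding matrix_vector_mult_def by (simp add: axis_def)
  also have "\<dots> = (\<Sum>k\<in>UNIV. if k = i then B $ j $ k else 0)"
    by (rule sum.cong) auto
  finally show ?thesis by simp
qed

lemma psd_diag: "psd B \<Longrightarrow> 0 \<le> (B::real^'n^'n) $ j $ j"
  unfolding psd_def diag_entry by blast

lemma psd_zero_row:
  fixes B :: "real^'n^'n"
  assumes "psd B" "transpose B = B" "B $ i $ i = 0"
  shows "B $ j $ i = 0" "B $ i $ j = 0"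
proof -
  have "B *v axis i 1 = 0" using psd_null[OF assms(1,2)] assms(3) diag_entry by metis
  then show "B $ j $ i = 0" using mv_axis[of B i j] by simp
  then show "B $ i $ j = 0" using assms(2) by (metis transpose_def vec_lambda_beta)
qed

lemma psd_cs:
  fixes B :: "real^'n^'n"
  assumes "psd B" "transpose B = B" "B $ i $ i > 0"
  shows "(B $ j $ i)^2 \<le> B $ i $ i * B $ j $ j"
proof -
  define t where "t = - B $ j $ i / B $ i $ i"
  have "0 \<le> (axis j 1 + t *\<^sub>R axis i 1) \<bullet> (B *v (axis j 1 + t *\<^sub>R axis i 1))"
    using assms(1) unfolding psd_def by blast
  also have "\<dots> = B$j$j + 2*t*(B$i$j) + t^2*(B$i$i)"
    unfolding quad_expand[OF assms(2)] by (simp add: inner_axis' mv_axis)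
  also have "B$i$j = B$j$i" using assms(2) by (metis transpose_def vec_lambda_beta)
  finally have "0 \<le> B$j$j + 2*t*(B$j$i) + t^2*(B$i$i)" .
  also have "\<dots> = B$j$j - (B$j$i)^2 / B$i$i" using assms(3) unfolding t_def
    by (simp add: field_simps power2_eq_square)
  finally show ?thesis using assms(3) by (simp add: field_simps)
qed

lemma outer_mv: "outer x *v z = (x \<bullet> z) *\<^sub>R (x::real^'n)"
  by (simp add: vec_eq_iff matrix_vector_mult_def outer_def inner_vec_def sum_distrib_left
      sum_distrib_right mult_ac)

lemma transpose_outer: "transpose (outer x) = outer x"
  by (simp add: vec_eq_iff transpose_def outer_def mult.commute)

lemma diagm_lin: "diagm (w - c *\<^sub>R v) = diagm w - c *\<^sub>R diagm v"
  by (simp add: diagm_def vec_eq_iff)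

lemma outer_scale: "outer (s *\<^sub>R x) = s^2 *\<^sub>R outer (x::real^'n)"
  by (simp add: vec_eq_iff outer_def power2_eq_square mult_ac)



definition chol_concl :: "real \<Rightarrow> real \<Rightarrow> 'n set \<Rightarrow> real^'n^'n \<Rightarrow> bool" where
  "chol_concl s D S B \<longleftrightarrow> (\<exists>F h w. finite F \<and> (\<forall>J\<in>F. int_vec J \<and> (\<forall>j. \<bar>J$j\<bar> \<le> 1 + s * sqrt D)) \<and>
     (\<forall>J\<in>F. h J > 0) \<and> (\<forall>j. w$j \<ge> - (real (card S - 1) / (4 * s^2))) \<and> (card S \<le> 1 \<longrightarrow> F = {}) \<and>
     B = (\<Sum>J\<in>F. h J *\<^sub>R outer J) + diagm w)"

lemma chol_base:
  fixes B :: "real^'n^'n"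
  assumes "card S \<le> 1" "psd B" "\<forall>i j. B$i$j \<noteq> 0 \<longrightarrow> i \<in> S \<and> j \<in> S"
  shows "chol_concl s D S B"
proof -
  define w :: "real^'n" where "w = (\<chi> j. B$j$j)"
  have "B = diagm w"
  proof -
    have "B$a$b = 0" if "a \<noteq> b" for a b
    proof (rule ccontr)
      assume "B$a$b \<noteq> 0"
      then have "a \<in> S" "b \<in> S" using assms(3) by auto
      then show False using assms(1) that card_le_Suc0_iff_eq[of S] by auto
    qed
    then show ?thesis by (auto simp: vec_eq_iff diagm_def w_def)
  qed
  moreover have "w$j \<ge> - (real (card S - 1) / (4 * s^2))" for j
  proof -
    have "card S - 1 = 0" using assms(1) by simp
    then show ?thesis using psd_diag[OF assms(2), of j] by (simp add: w_def)
  qed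
  ultimately show ?thesis unfolding chol_concl_def
    by (intro exI[of _ "{}"] exI[of _ "\<lambda>_. 0"] exI[of _ w]) auto
qed

lemma chol_mono:
  assumes "chol_concl s D S' B" "card S' \<le> card S" "card S \<le> 1 \<Longrightarrow> card S' \<le> 1"
  shows "chol_concl s D S B"
proof -
  obtain F h w where F: "finite F" "\<forall>J\<in>F. int_vec J \<and> (\<forall>j. \<bar>J$j\<bar> \<le> 1 + s * sqrt D)"
     "\<forall>J\<in>F. h J > 0" "\<forall>j. w$j \<ge> - (real (card S' - 1) / (4 * s^2))" "card S' \<le> 1 \<longrightarrow> F = {}"
     "B = (\<Sum>J\<in>F. h J *\<^sub>R outer J) + diagm w"
    using assms(1) unfolding chol_concl_def by blast
  have "real (card S' - 1) \<le> real (card S - 1)" using assms(2) by simp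
  then have "real (card S' - 1) / (4 * s^2) \<le> real (card S - 1) / (4 * s^2)"
    by (simp add: divide_right_mono)
  then have "\<forall>j. w$j \<ge> - (real (card S - 1) / (4 * s^2))" using F(4) by (smt (verit))
  then show ?thesis unfolding chol_concl_def using F assms(3) by blast
qed

lemma chol:
  fixes s D :: real
  assumes s: "s > 0" and D: "D \<ge> 0"
  shows "card S = n \<Longrightarrow> psd B \<Longrightarrow> transpose B = B \<Longrightarrow> (\<forall>i j. B$i$j \<noteq> 0 \<longrightarrow> i \<in> S \<and> j \<in> S)
     \<Longrightarrow> (\<forall>i. B$i$i \<le> D) \<Longrightarrow> chol_concl s D S (B::real^'n^'n)"
proof (induction n arbitrary: S B)
  case 0
  then show ?case using chol_base[of S B s D] by auto
next
  case (Suc m)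
  show ?case
  proof (cases "m = 0")
    case True
    then show ?thesis using chol_base[of S B s D] Suc.prems by auto
  next
    case False
    have "S \<noteq> {}" using Suc.prems(1) by auto
    then obtain i where iS: "i \<in> S" by blast
    define S' where "S' = S - {i}"
    have cS': "card S' = m" unfolding S'_def using Suc.prems(1) iS by simp
    have psdB: "psd B" and symB: "transpose B = B" and supB: "\<forall>i j. B$i$j \<noteq> 0 \<longrightarrow> i \<in> S \<and> j \<in> S"
      and diagB: "\<forall>i. B$i$i \<le> D" using Suc.prems by auto
    have symE: "B$a$b = B$b$a" for a b
    proof -
      have "transpose B $ b $ a = B $ a $ b" by (simp add: transpose_def)
      then show ?thesis using symB by simp
    qed
    show ?thesis
    proof (cases "B$i$i = 0")
      case True
      have "\<forall>a b. B$a$b \<noteq> 0 \<longrightarrow> a \<in> S' \<and> b \<in> S'"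
      proof (intro allI impI)
        fix a b assume "B$a$b \<noteq> 0"
        moreover have "a \<noteq> i" "b \<noteq> i" using psd_zero_row[OF psdB symB True] calculation by auto
        ultimately show "a \<in> S' \<and> b \<in> S'" using supB unfolding S'_def by blast
      qed
      then have "chol_concl s D S' B" using Suc.IH[OF cS' psdB symB] diagB by blast
      moreover have "card S' \<le> card S" using cS' Suc.prems(1) by simp
      moreover have "card S \<le> 1 \<Longrightarrow> card S' \<le> 1" using cS' Suc.prems(1) by simp
      ultimately show ?thesis by (rule chol_mono)
    next
      case False
      then have Bii: "B$i$i > 0" using psd_diag[OF psdB, of i] by simp
      define r where "r = sqrt (B$i$i)"
      have r: "r > 0" "r^2 = B$i$i" using Bii unfolding r_def by auto
      define x :: "real^'n" where "x = (\<chi> j. B$j$i / r)"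
      define B' where "B' = B - outer x"
      have ox: "outer x $ a $ b = B$a$i * B$b$i / B$i$i" for a b
        using r unfolding x_def outer_def by (simp add: power2_eq_square)
      have symB': "transpose B' = B'" unfolding B'_def transpose_diff transpose_outer symB ..
      have supB': "\<forall>a b. B'$a$b \<noteq> 0 \<longrightarrow> a \<in> S' \<and> b \<in> S'"
      proof (intro allI impI)
        fix a b assume ne: "B'$a$b \<noteq> 0"
        have ai: "a \<noteq> i"
        proof
          assume "a = i" then have "B'$a$b = 0" using Bii unfolding B'_def by (simp add: ox symE)
          then show False using ne by simp
        qed
        have bi: "b \<noteq> i"
        proof
          assume "b = i" then have "B'$a$b = 0" using Bii unfolding B'_def by (simp add: ox symE)
          then show False using ne by simp
        qed
        have "B$a$b \<noteq> 0 \<or> B$a$i \<noteq> 0 \<and> B$b$i \<noteq> 0" using ne unfolding B'_def by (auto simp: ox)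
        then have "a \<in> S \<and> b \<in> S" using supB by blast
        then show "a \<in> S' \<and> b \<in> S'" using ai bi unfolding S'_def by auto
      qed
      have diagB': "\<forall>j. B'$j$j \<le> D"
      proof
        fix j
        have "B'$j$j = B$j$j - (B$j$i)^2 / B$i$i" unfolding B'_def by (simp add: ox power2_eq_square)
        also have "\<dots> \<le> B$j$j" using Bii by simp
        finally have "B'$j$j \<le> B$j$j" .
        then show "B'$j$j \<le> D" using diagB[rule_format, of j] by linarith
      qed
      have psdB': "psd B'" unfolding psd_def
      proof
        fix z
        define a where "a = axis i 1 \<bullet> (B *v z)"
        have "0 \<le> (z + (- a / B$i$i) *\<^sub>R axis i 1) \<bullet> (B *v (z + (- a / B$i$i) *\<^sub>R axis i 1))"
          using psdB unfolding psd_def by blast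
        also have "\<dots> = z \<bullet> (B *v z) + 2*(- a / B$i$i)*a + (a / B$i$i)^2 * B$i$i"
          unfolding quad_expand[OF symB] a_def by (simp add: inner_axis' mv_axis)
        also have "\<dots> = z \<bullet> (B *v z) - a^2 / B$i$i" using Bii by (simp add: field_simps power2_eq_square)
        also have "a^2 / B$i$i = (x \<bullet> z)^2"
        proof -
          have "a = (\<Sum>j\<in>UNIV. B$i$j * z$j)" unfolding a_def by (simp add: inner_axis' matrix_vector_mult_def)
          moreover have "x \<bullet> z = (\<Sum>j\<in>UNIV. B$i$j * z$j) / r"
            unfolding x_def inner_vec_def by (simp add: symE sum_divide_distrib)
          ultimately show ?thesis using r by (simp add: power_divide)
        qed
        also have "(x \<bullet> z)^2 = z \<bullet> (outer x *v z)" by (simp add: outer_mv power2_eq_square inner_commute)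
        finally show "0 \<le> z \<bullet> (B' *v z)" unfolding B'_def
          by (simp add: matrix_vector_mult_diff_rdistrib inner_diff_right)
      qed
      obtain F h w where F: "finite F" "\<forall>J\<in>F. int_vec J \<and> (\<forall>j. \<bar>J$j\<bar> \<le> 1 + s * sqrt D)"
        "\<forall>J\<in>F. h J > 0" "\<forall>j. w$j \<ge> - (real (m - 1) / (4 * s^2))"
        "B' = (\<Sum>J\<in>F. h J *\<^sub>R outer J) + diagm w"
        using Suc.IH[OF cS' psdB' symB' supB' diagB'] cS' unfolding chol_concl_def by auto
      obtain G q v where G: "finite G" "\<forall>J\<in>G. q J > 0"
        "(\<Sum>J\<in>G. q J *\<^sub>R outer J) = outer (s *\<^sub>R x) + diagm v"
        "\<forall>j. 0 \<le> v$j \<and> v$j \<le> 1/4" "\<forall>J\<in>G. int_vec J \<and> (\<forall>j. \<bar>J$j\<bar> \<le> \<bar>(s *\<^sub>R x)$j\<bar> + 1)"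
        using round[of "s *\<^sub>R x"] by blast
      have xb: "\<bar>(s *\<^sub>R x)$j\<bar> \<le> s * sqrt D" for j
      proof -
        have "(B$j$i)^2 \<le> B$i$i * B$j$j" by (rule psd_cs[OF psdB symB Bii])
        then have "\<bar>B$j$i\<bar> \<le> r * sqrt (B$j$j)" unfolding r_def
          by (metis real_sqrt_abs real_sqrt_le_mono real_sqrt_mult)
        then have "\<bar>B$j$i\<bar> / r \<le> sqrt D" using r(1) diagB
          by (smt (verit, ccfv_SIG) mult.commute pos_divide_le_eq real_sqrt_le_mono)
        then have "s * (\<bar>B$j$i\<bar> / r) \<le> s * sqrt D" using s by (intro mult_left_mono) auto
        then show ?thesis using s r(1) unfolding x_def by (simp add: abs_mult del: times_divide_eq_right)
      qed
      define h' where "h' J = (if J \<in> F then h J else 0) + (if J \<in> G then q J / s^2 else 0)" for J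
      define w' where "w' = w - (1/s^2) *\<^sub>R v"
      have "B = B' + outer x" unfolding B'_def by simp
      also have "outer x = (1/s^2) *\<^sub>R ((\<Sum>J\<in>G. q J *\<^sub>R outer J) - diagm v)"
        using G(3) s by (simp add: outer_scale)
      also have "(1/s^2) *\<^sub>R ((\<Sum>J\<in>G. q J *\<^sub>R outer J) - diagm v) = (\<Sum>J\<in>G. (q J / s^2) *\<^sub>R outer J) - (1/s^2) *\<^sub>R diagm v"
        by (simp add: scaleR_diff_right scaleR_sum_right)
      finally have "B = (\<Sum>J\<in>F\<union>G. h' J *\<^sub>R outer J) + diagm w'"
        unfolding F(5) h'_def merge[OF F(1) G(1)] w'_def diagm_lin by (simp add: algebra_simps)
      moreover have "\<forall>J\<in>F\<union>G. h' J > 0" using F(3) G(2) s unfolding h'_def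
        by (auto simp: add_pos_nonneg add_nonneg_pos)
      moreover have "\<forall>J\<in>F\<union>G. int_vec J \<and> (\<forall>j. \<bar>J$j\<bar> \<le> 1 + s * sqrt D)"
      proof
        fix J assume "J \<in> F \<union> G"
        then show "int_vec J \<and> (\<forall>j. \<bar>J$j\<bar> \<le> 1 + s * sqrt D)"
        proof
          assume "J \<in> F" then show ?thesis using F(2) by blast
        next
          assume J: "J \<in> G"
          have "\<bar>J$j\<bar> \<le> 1 + s * sqrt D" for j
          proof -
            have "\<bar>J$j\<bar> \<le> \<bar>(s *\<^sub>R x)$j\<bar> + 1" using G(5) J by blast
            then show ?thesis using xb[of j] by linarith
          qed
          then show ?thesis using G(5) J by blast
        qed
      qed
      moreover have "\<forall>j. w'$j \<ge> - (real (card S - 1) / (4 * s^2))"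
      proof
        fix j
        have cm: "card S - 1 = m" using Suc.prems(1) by simp
        have "real (m-1) = real m - 1" using \<open>m \<noteq> 0\<close> by simp
        then have "w$j \<ge> - ((real m - 1) / (4 * s^2))" using F(4) by simp
        moreover have "v$j / s^2 \<le> (1/4) / s^2" using G(4) s by (intro divide_right_mono) auto
        moreover have "(1/4) / s^2 = 1 / (4 * s^2)" by simp
        ultimately have "w$j - v$j/s^2 \<ge> - ((real m - 1) / (4 * s^2)) - 1 / (4 * s^2)" by linarith
        also have "- ((real m - 1) / (4 * s^2)) - 1 / (4 * s^2) = - (real m / (4 * s^2))"
          by (simp add: diff_divide_distrib add_divide_distrib[symmetric])
        finally show "w'$j \<ge> - (real (card S - 1) / (4 * s^2))" unfolding w'_def cm by simp
      qed
      moreover have "\<not> card S \<le> 1" using Suc.prems(1) \<open>m \<noteq> 0\<close> by simp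
      ultimately show ?thesis unfolding chol_concl_def using F(1) G(1)
        by (intro exI[of _ "F\<union>G"] exI[of _ h'] exI[of _ w']) auto
    qed
  qed
qed



lemma outer_neg: "outer (- J) = outer (J::real^'n)"
  by (simp add: outer_def)

lemma diagm_sum:
  fixes c :: "real^'n"
  shows "diagm c = (\<Sum>i\<in>UNIV. c$i *\<^sub>R outer (axis i (1::real)))"
proof -
  have "(\<Sum>i\<in>UNIV. c$i * (axis i 1 $ a * axis i (1::real) $ b)) = (if a = b then c$a else 0)" for a b :: 'n
  proof -
    have "(\<Sum>i\<in>UNIV. c$i * (axis i 1 $ a * axis i (1::real) $ b)) = (\<Sum>i\<in>UNIV. if i = a then (if a = b then c$a else 0) else 0)"
      by (rule sum.cong) (auto simp: axis_def)
    then show ?thesis by simp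
  qed
  then show ?thesis by (simp add: vec_eq_iff diagm_def outer_def sum_component)
qed

lemma axis_sum_pick:
  "(\<Sum>i\<in>UNIV. if axis k (1::real) = axis i 1 then (c::real^'n)$i else 0) = c$k"
proof -
  have "(\<Sum>i\<in>UNIV. if axis k (1::real) = axis i 1 then c$i else 0) = (\<Sum>i\<in>UNIV. if k = i then c$i else 0)"
    by (rule sum.cong) (auto simp: axis_eq_axis)
  then show ?thesis by simp
qed

lemma neg_img: "J \<in> uminus ` X \<Longrightarrow> - J \<in> (X::('a::ab_group_add) set)"
  by auto

theorem lemma3p1:
  fixes \<sigma>2 :: "real^'n^'n"
  assumes "sym_pos_def_mat \<sigma>2"
  shows "\<exists>\<J> :: (real^'n) set. \<exists>g :: real^'n \<Rightarrow> real.
           finite \<J> \<and> (\<forall>J\<in>\<J>. int_vec J) \<and>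
           \<sigma>2 = (\<Sum>J\<in>\<J>. g J *\<^sub>R outer J) \<and>
           (\<forall>J\<in>\<J>. g J > 0) \<and>
           (\<forall>i. axis i 1 \<in> \<J>) \<and>
           (\<forall>J\<in>\<J>. - J \<in> \<J> \<and> g (- J) = g J) \<and>
           (\<forall>J\<in>\<J>. \<forall>i. \<bar>J$i\<bar> \<le> 1 + sqrt (2 * (real CARD('n) - 1) * cond_number \<sigma>2) / 2) \<and>
           (\<forall>i. g (axis i 1) \<ge> lambda_min \<sigma>2 / 4)"
proof -
  define A where "A = \<sigma>2"
  have sym: "transpose A = A" using assms unfolding sym_pos_def_mat_def A_def by auto
  obtain \<mu> \<nu> where lmin: "lambda_min A = \<mu>" and mu: "\<mu> > 0" and low: "\<forall>x. \<mu> * (x \<bullet> x) \<le> x \<bullet> (A *v x)"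
    and munu: "\<mu> \<le> \<nu>" and nul: "\<nu> \<le> lambda_max A" and diagA: "\<forall>j. A $ j $ j \<le> \<nu>"
    using eig_facts[OF assms] unfolding A_def by blast
  define lmax where "lmax = lambda_max A"
  define d where "d = CARD('n)"
  define R where "R = sqrt (2 * (real d - 1) * cond_number A) / 2"
  have rho: "cond_number A = lmax / \<mu>" unfolding cond_number_def lmax_def lmin ..
  have d1: "d \<ge> 1" unfolding d_def by (simp add: Suc_leI)
  have R0: "R \<ge> 0" unfolding R_def rho using d1 mu munu nul lmax_def by simp
  define B where "B = A - mat \<mu>"
  have Bx: "B *v x = A *v x - \<mu> *\<^sub>R x" for x
    unfolding B_def by (simp add: matrix_vector_mult_diff_rdistrib mat_mult_vec)
  have psdB: "psd B" unfolding psd_def Bx using low by (simp add: inner_diff_right)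
  have symB: "transpose B = B" unfolding B_def transpose_diff transpose_mat sym ..
  define D where "D = \<nu> - \<mu>"
  have D0: "D \<ge> 0" using munu unfolding D_def by simp
  have diagB: "\<forall>i. B$i$i \<le> D" using diagA unfolding B_def D_def by (simp add: mat_def)
  define s where "s = (if d \<ge> 2 then sqrt ((real d - 1) / (2*\<mu>)) else 1)"
  have s0: "s > 0" unfolding s_def using mu by auto
  have "chol_concl s D (UNIV::'n set) B"
    using chol[OF s0 D0, of UNIV d B] psdB symB diagB unfolding d_def by auto
  then obtain F h w where F: "finite F" "\<forall>J\<in>F. int_vec J \<and> (\<forall>j. \<bar>J$j\<bar> \<le> 1 + s * sqrt D)"
     "\<forall>J\<in>F. h J > 0" "\<forall>j. w$j \<ge> - (real (d - 1) / (4 * s^2))" "d \<le> 1 \<longrightarrow> F = {}"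
     "B = (\<Sum>J\<in>F. h J *\<^sub>R outer J) + diagm w"
    unfolding chol_concl_def d_def by blast
  define c :: "real^'n" where "c = w + (\<chi> j. \<mu>)"
  have cge: "c$j \<ge> \<mu>/2" for j
  proof -
  have wj: "w$j \<ge> - (real (d - 1) / (4 * s^2))" using F(4) by blast
  have cj: "c$j = w$j + \<mu>" by (simp add: c_def)
  show ?thesis
  proof (cases "d \<ge> 2")
    case True
    have "s^2 = (real d - 1) / (2*\<mu>)" unfolding s_def using True mu by simp
    have dd: "real (d-1) = real d - 1" "real d - 1 > 0" using True by auto
    have "4 * s^2 = 2*(real d - 1)/\<mu>" using \<open>s^2 = _\<close> mu by (simp add: field_simps)
    then have "real (d - 1) / (4 * s^2) = (real d - 1) / (2*(real d - 1)/\<mu>)" using dd by simp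
    also have "\<dots> = \<mu>/2" using dd mu by (simp add: field_simps)
    finally have "real (d - 1) / (4 * s^2) = \<mu>/2" .
    then show ?thesis using wj cj by linarith
  next
    case False
    then have "d - 1 = 0" by simp
    then show ?thesis using wj cj mu by simp
  qed
  qed
  have Adec: "A = (\<Sum>J\<in>F. h J *\<^sub>R outer J) + (\<Sum>i\<in>UNIV. c$i *\<^sub>R outer (axis i 1))"
  proof -
    have "A = B + mat \<mu>" unfolding B_def by simp
    also have "mat \<mu> = diagm (\<chi> j. \<mu>)" by (simp add: vec_eq_iff mat_def diagm_def)
    finally show ?thesis unfolding F(6) c_def diagm_add diagm_sum[symmetric] by (simp add: add.assoc)
  qed
  define E where "E = range (\<lambda>i. axis i (1::real) :: real^'n)"
  define JJ where "JJ = F \<union> uminus ` F \<union> E \<union> uminus ` E"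
  define h' where "h' J = (if J \<in> F then h J else 0) + (\<Sum>i\<in>UNIV. if J = axis i 1 then c$i else 0)" for J
  define g where "g J = (h' J + h' (- J)) / 2" for J
  have cpos: "c$i > 0" for i using cge[of i] mu by linarith
  have h'nn: "h' J \<ge> 0" for J unfolding h'_def using F(3) cpos
    by (intro add_nonneg_nonneg sum_nonneg) (auto intro: less_imp_le)
  have h'F: "h' J > 0" if "J \<in> F" for J
  proof -
    have "0 \<le> (\<Sum>i\<in>UNIV. if J = axis i 1 then c$i else 0)" using cpos by (intro sum_nonneg) (auto intro: less_imp_le)
    then show ?thesis unfolding h'_def using that F(3) by (simp add: add_pos_nonneg)
  qed
  have h'E: "h' (axis k 1) \<ge> c$k" for k
    unfolding h'_def axis_sum_pick using F(3) by (simp add: less_imp_le)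
  have finJJ: "finite JJ" unfolding JJ_def E_def using F(1) by simp
  have negJJ: "- J \<in> JJ" if "J \<in> JJ" for J using that unfolding JJ_def by (auto simp: image_iff)
  have FJJ: "F \<subseteq> JJ" and EJJ: "E \<subseteq> JJ" unfolding JJ_def by auto
  have sum_neg: "(\<Sum>J\<in>JJ. h' (- J) *\<^sub>R outer J) = (\<Sum>J\<in>JJ. h' J *\<^sub>R outer J)"
    by (rule sum.reindex_bij_witness[of _ uminus uminus]) (auto simp: negJJ outer_neg)
  have sumJJ: "(\<Sum>J\<in>JJ. h' J *\<^sub>R outer J) = \<sigma>2"
  proof -
    have 1: "(\<Sum>J\<in>JJ. (if J \<in> F then h J else 0) *\<^sub>R outer J) = (\<Sum>J\<in>F. h J *\<^sub>R outer J)"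
    proof -
      have "(\<Sum>J\<in>JJ. (if J \<in> F then h J else 0) *\<^sub>R outer J) = (\<Sum>J\<in>JJ. if J \<in> F then h J *\<^sub>R outer J else 0)"
        by (rule sum.cong) auto
      also have "\<dots> = (\<Sum>J\<in>JJ \<inter> F. h J *\<^sub>R outer J)"
        using sum.inter_restrict[of JJ "\<lambda>J. h J *\<^sub>R outer J" F] finJJ by simp
      finally show ?thesis using FJJ by (simp add: Int_absorb1)
    qed
    have 2: "(\<Sum>J\<in>JJ. (\<Sum>i\<in>UNIV. if J = axis i 1 then c$i else 0) *\<^sub>R outer J) = (\<Sum>i\<in>UNIV. c$i *\<^sub>R outer (axis i 1))"
    proof -
      have "(\<Sum>J\<in>JJ. (\<Sum>i\<in>UNIV. if J = axis i 1 then c$i else 0) *\<^sub>R outer J)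
          = (\<Sum>J\<in>JJ. \<Sum>i\<in>UNIV. if J = axis i 1 then c$i *\<^sub>R outer J else 0)"
        unfolding scaleR_sum_left by (intro sum.cong refl) auto
      also have "\<dots> = (\<Sum>i\<in>UNIV. \<Sum>J\<in>JJ. if J = axis i 1 then c$i *\<^sub>R outer J else 0)"
        by (rule sum.swap)
      also have "\<dots> = (\<Sum>i\<in>UNIV. c$i *\<^sub>R outer (axis i 1))"
      proof (rule sum.cong)
        fix i :: 'n
        have "axis i 1 \<in> JJ" using EJJ unfolding E_def by auto
        then show "(\<Sum>J\<in>JJ. if J = axis i 1 then c$i *\<^sub>R outer J else 0) = c$i *\<^sub>R outer (axis i 1)"
          using finJJ by (simp add: sum.delta')
      qed simp
      finally show ?thesis .
    qed
    show ?thesis unfolding h'_def scaleR_add_left sum.distrib 1 2 Adec[symmetric] A_def ..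
  qed
  have gsum: "\<sigma>2 = (\<Sum>J\<in>JJ. g J *\<^sub>R outer J)"
  proof -
    have "(\<Sum>J\<in>JJ. g J *\<^sub>R outer J) = (1/2) *\<^sub>R ((\<Sum>J\<in>JJ. h' J *\<^sub>R outer J) + (\<Sum>J\<in>JJ. h' (- J) *\<^sub>R outer J))"
      unfolding g_def scaleR_sum_right sum.distrib[symmetric]
      by (intro sum.cong refl) (simp add: scaleR_add_left scaleR_add_right add_divide_distrib)
    then show ?thesis unfolding sum_neg sumJJ by (simp add: scaleR_2[symmetric])
  qed
  have gpos: "g J > 0" if "J \<in> JJ" for J
  proof -
    have "h' J > 0 \<or> h' (- J) > 0"
    proof -
      have "J \<in> F \<or> J \<in> uminus ` F \<or> J \<in> E \<or> J \<in> uminus ` E" using that unfolding JJ_def by blast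
      then consider "J \<in> F" | "- J \<in> F" | "J \<in> E" | "- J \<in> E" using neg_img by blast
      then show ?thesis
      proof cases
        case 1 then show ?thesis using h'F by blast
      next
        case 2 then show ?thesis using h'F by blast
      next
        case 3 then show ?thesis using h'E cpos unfolding E_def by (smt (verit) rangeE)
      next
        case 4 then show ?thesis using h'E cpos unfolding E_def by (smt (verit) rangeE)
      qed
    qed
    then show ?thesis unfolding g_def using h'nn[of J] h'nn[of "-J"] by (auto intro: add_pos_nonneg add_nonneg_pos)
  qed
  have gneg: "g (- J) = g J" for J unfolding g_def by simp
  have intJJ: "int_vec J" if "J \<in> JJ" for J
  proof -
    have ie: "int_vec (axis i (1::real) :: real^'n)" for i unfolding int_vec_def axis_def by auto
    have in_: "int_vec (- J)" if "int_vec J" for J :: "real^'n" using that unfolding int_vec_def by simp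
    show ?thesis using that F(2) ie in_ unfolding JJ_def E_def by auto
  qed
  have sD: "s * sqrt D \<le> R" if "d \<ge> 2"
  proof -
    have "s * sqrt D = sqrt ((real d - 1) / (2*\<mu>) * D)" unfolding s_def using that real_sqrt_mult[of "(real d - 1) / (2*\<mu>)" D] by simp
    also have "\<dots> \<le> sqrt ((2 * (real d - 1) * cond_number A) / 4)"
    proof (rule real_sqrt_le_mono)
      have "D \<le> lmax" unfolding D_def lmax_def using nul mu by linarith
      then have "(real d - 1) / (2*\<mu>) * D \<le> (real d - 1) / (2*\<mu>) * lmax" using that mu
        by (intro mult_left_mono) auto
      also have "\<dots> = (2 * (real d - 1) * cond_number A) / 4" unfolding rho using mu by (simp add: field_simps)
      finally show "(real d - 1) / (2*\<mu>) * D \<le> (2 * (real d - 1) * cond_number A) / 4" .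
    qed
    also have "\<dots> = R" unfolding R_def by (simp add: real_sqrt_divide)
    finally show ?thesis .
  qed
  have bnd: "\<bar>J$i\<bar> \<le> 1 + R" if "J \<in> JJ" for J i
  proof -
    have bF: "\<bar>J$i\<bar> \<le> 1 + R" if "J \<in> F" for J
    proof -
      have "d \<ge> 2" using F(5) that by (cases "d \<le> 1") auto
      moreover have "\<bar>J$i\<bar> \<le> 1 + s * sqrt D" using F(2) that by blast
      ultimately show ?thesis using sD by fastforce
    qed
    have bE: "\<bar>J$i\<bar> \<le> 1 + R" if "J \<in> E" for J using that R0 unfolding E_def by (auto simp: axis_def)
    show ?thesis using that bF bE unfolding JJ_def by auto
  qed
  have gE: "g (axis i 1) \<ge> lambda_min \<sigma>2 / 4" for i
  proof -
    have "c$i \<le> h' (axis i 1) + h' (- axis i 1)" using h'E[of i] h'nn[of "- axis i 1"]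
      by (simp add: add_increasing2)
    then have "c$i / 2 \<le> g (axis i 1)" unfolding g_def by (intro divide_right_mono) auto
    moreover have "lambda_min \<sigma>2 / 4 \<le> c$i / 2" using cge[of i] lmin unfolding A_def by simp
    ultimately show ?thesis by (rule order_trans[rotated])
  qed
  show ?thesis
    apply (rule exI[of _ JJ], rule exI[of _ g])
    using finJJ intJJ gsum gpos EJJ negJJ gneg bnd gE unfolding E_def R_def d_def A_def by auto
qed

end
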